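(* Suppose a closed $n$-braid $\beta$ can be represented by a braid word containing a factor $\sigma_i^{-1}$ but no factor $\sigma_i$, for some $i\in\{1,\dots,n-1\}$. Then $\kappa(\beta)=2$.
   Context: Work over $\mathbb{Z}/2$ with the Khovanov chain complex $\mathrm{CKh}$ of a link diagram (cube of resolutions, circles labeled $v_\pm$, Khovanov's merge/split differential). For $\beta\in B_n$ with closure $\bar\beta$ drawn around the braid axis, a circle in a resolution is nontrivial if it winds an odd number of times around the axis, trivial otherwise. The $k$-grading of a canonical generator is (number of nontrivial circles labeled $v_+$) minus (number of nontrivial circles labeled $v_-$); the differential does not increase $k$, so $\mathcal{F}_i=\mathrm{span}\{x:k(x)\le i\}$ are subcomplexes. The braidlike resolution ($0$-resolve positive, $1$-resolve negative crossings) has $n$ nontrivial circles; $\psi(\bar\beta)$ labels all of them $v_-$. Define $\kappa(\beta)=n+\min\{i:\psi(\bar\beta)=dy,\ y\in\mathcal{F}_i\}$ if $\psi(\bar\beta)$ is a boundary, $\kappa(\beta)=\infty$ otherwise. *)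

theory Defs
  imports Main "HOL-Library.Extended_Real"
begin

text \<open>A braid word in B_n is a list of letters (i, p): p = True means sigma_i,
  p = False means sigma_i^{-1}; valid letters have 1 <= i <= n-1.
  Strands are numbered 0..n-1 at each level; sigma_i acts on strands i-1 and i.
  Crossing c (c < length w) sits between level c and level (c+1) mod length w
  (closure). Nodes (k, j) are the points of strand j at level k.
  A resolution is the set s of crossings that are 1-resolved.\<close>

type_synonym letter = "nat \<times> bool"
type_synonym node = "nat \<times> nat"

definition nodes :: "nat \<Rightarrow> letter list \<Rightarrow> node set" where
  "nodes n w = {..<length w} \<times> {..<n}"

text \<open>Turnback (cup-cap) smoothing at crossing c: the 1-resolution of a positive
  crossing or the 0-resolution of a negative crossing; otherwise the smoothing is
  the braidlike (vertical) one.\<close>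
definition cross_edges :: "nat \<Rightarrow> letter list \<Rightarrow> nat set \<Rightarrow> nat \<Rightarrow> (node \<times> node) set" where
  "cross_edges n w s c =
    (let i = fst (w ! c); p = snd (w ! c); t = (p = (c \<in> s)); c' = Suc c mod length w in
      {((c, j), (c', j)) | j. j < n \<and> j \<noteq> i - 1 \<and> j \<noteq> i} \<union>
      (if t then {((c, i - 1), (c, i)), ((c', i - 1), (c', i))}
            else {((c, i - 1), (c', i - 1)), ((c, i), (c', i))}))"

definition edges :: "nat \<Rightarrow> letter list \<Rightarrow> nat set \<Rightarrow> (node \<times> node) set" where
  "edges n w s = (\<Union>c\<in>{..<length w}. cross_edges n w s c)"

definition conn :: "nat \<Rightarrow> letter list \<Rightarrow> nat set \<Rightarrow> (node \<times> node) set" where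
  "conn n w s = (edges n w s \<union> (edges n w s)\<inverse>)\<^sup>*"

definition circles :: "nat \<Rightarrow> letter list \<Rightarrow> nat set \<Rightarrow> node set set" where
  "circles n w s = (\<lambda>x. {y. (x, y) \<in> conn n w s}) ` nodes n w"

text \<open>A circle winds an odd number of times around the braid axis iff it meets
  the (generic) horizontal line at level 0 an odd number of times.\<close>
definition nontrivial :: "node set \<Rightarrow> bool" where
  "nontrivial C = odd (card {j. (0, j) \<in> C})"

text \<open>Canonical generators: (s, M), M = set of circles labelled v-, the others v+.\<close>
definition gens :: "nat \<Rightarrow> letter list \<Rightarrow> (nat set \<times> node set set) set" where
  "gens n w = {(s, M). s \<subseteq> {..<length w} \<and> M \<subseteq> circles n w s}"

definition kgr :: "nat \<Rightarrow> letter list \<Rightarrow> nat set \<times> node set set \<Rightarrow> int" where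
  "kgr n w x = (case x of (s, M) \<Rightarrow>
     int (card {C \<in> circles n w s. nontrivial C \<and> C \<notin> M})
     - int (card {C \<in> circles n w s. nontrivial C \<and> C \<in> M}))"

text \<open>Coefficient (over Z/2) of y in the Khovanov differential of x: merge
  (m(v+v+)=v+, m(v+v-)=m(v-v+)=v-, m(v-v-)=0) and split
  (Delta(v+)=v+v- + v-v+, Delta(v-)=v-v-), unchanged circles keep labels.\<close>
definition dcoef :: "nat \<Rightarrow> letter list \<Rightarrow> nat set \<times> node set set \<Rightarrow> nat set \<times> node set set \<Rightarrow> bool" where
  "dcoef n w x y = (case x of (s, M) \<Rightarrow> case y of (s', M') \<Rightarrow>
     (\<exists>c < length w. c \<notin> s \<and> s' = insert c s \<and>
       (let A = circles n w s - circles n w s'; B = circles n w s' - circles n w s in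
         (\<forall>C \<in> circles n w s \<inter> circles n w s'. (C \<in> M) = (C \<in> M')) \<and>
         ((card A = 2 \<and> card B = 1 \<and> card (B \<inter> M') = card (A \<inter> M)) \<or>
          (card A = 1 \<and> card B = 2 \<and> card (B \<inter> M') = card (A \<inter> M) + 1)))))"

text \<open>Chains over Z/2 are finite sets of generators; the differential.\<close>
definition kd :: "nat \<Rightarrow> letter list \<Rightarrow> (nat set \<times> node set set) set \<Rightarrow> (nat set \<times> node set set) set" where
  "kd n w X = {y \<in> gens n w. odd (card {x \<in> X \<inter> gens n w. dcoef n w x y})}"

definition braidlike :: "letter list \<Rightarrow> nat set" where
  "braidlike w = {c. c < length w \<and> \<not> snd (w ! c)}"

definition psi :: "nat \<Rightarrow> letter list \<Rightarrow> nat set \<times> node set set" where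
  "psi n w = (braidlike w, {C \<in> circles n w (braidlike w). nontrivial C})"

definition bounds_in :: "nat \<Rightarrow> letter list \<Rightarrow> int \<Rightarrow> bool" where
  "bounds_in n w i = (\<exists>Y \<subseteq> gens n w. (\<forall>y \<in> Y. kgr n w y \<le> i) \<and> kd n w Y = {psi n w})"

definition kappa :: "nat \<Rightarrow> letter list \<Rightarrow> ereal" where
  "kappa n w = (if \<exists>i. bounds_in n w i
     then ereal (real_of_int (int n + Inf {i. bounds_in n w i})) else \<infinity>)"

end

theory Submission
  imports Defs
begin

definition Str :: "nat \<Rightarrow> nat \<Rightarrow> node set" where "Str L a = {(k',b). k' < L \<and> b = a}"
definition Tc :: "nat \<Rightarrow> nat \<Rightarrow> node set" where "Tc L j = {(k',b). k' < L \<and> (b = j - 1 \<or> b = j)}"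

lemma edge_vert:
  assumes "k < length w" "a < n" "snd (w!k) \<noteq> (k \<in> s)"
  shows "((k,a),(Suc k mod length w, a)) \<in> edges n w s"
  using assms by (auto simp: edges_def cross_edges_def Let_def intro!: bexI[of _ k])

lemma edge_turn:
  assumes "k < length w" "snd (w!k) = (k \<in> s)"
  shows "((k, fst (w!k) - 1),(k, fst (w!k))) \<in> edges n w s"
  using assms by (auto simp: edges_def cross_edges_def Let_def intro!: bexI[of _ k])

lemma conn_sym: "(x,y) \<in> conn n w s \<Longrightarrow> (y,x) \<in> conn n w s"
  unfolding conn_def
  by (metis converse_Un converse_converse rtrancl_converseI sup_commute)

lemma edge_conn: "(x,y) \<in> edges n w s \<Longrightarrow> (x,y) \<in> conn n w s"
  unfolding conn_def by blast

lemma conn_trans: "(x,y) \<in> conn n w s \<Longrightarrow> (y,z) \<in> conn n w s \<Longrightarrow> (x,z) \<in> conn n w s"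
  unfolding conn_def by (meson rtrancl_trans)


lemma chain:
  assumes L: "0 < length w" and a: "a < n"
    and V: "\<forall>k<length w. k \<noteq> e \<longrightarrow> snd (w!k) \<noteq> (k \<in> s)"
  shows "k < length w \<Longrightarrow> ((0,a),(k,a)) \<in> conn n w s"
proof -
  let ?L = "length w"
  have ed: "((k,a),(Suc k mod ?L, a)) \<in> conn n w s" if "k < ?L" "k \<noteq> e" for k
    using edge_vert[of k w a n s] that V a edge_conn by blast
  have P1: "k < ?L \<Longrightarrow> k \<le> e \<Longrightarrow> ((0,a),(k,a)) \<in> conn n w s" for k
  proof (induction k)
    case 0 then show ?case by (simp add: conn_def)
  next
    case (Suc k)
    have "k < ?L" "k \<noteq> e" using Suc.prems by auto
    then have "((k,a),(Suc k mod ?L, a)) \<in> conn n w s" by (rule ed)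
    moreover have "Suc k mod ?L = Suc k" using Suc by simp
    ultimately have "((k,a),(Suc k, a)) \<in> conn n w s" by simp
    moreover have "((0,a),(k,a)) \<in> conn n w s" using Suc by simp
    ultimately show ?case using conn_trans by blast
  qed
  show "k < ?L \<Longrightarrow> ((0,a),(k,a)) \<in> conn n w s"
  proof (cases "?L - 1 \<le> e")
    case True
    then show "k < ?L \<Longrightarrow> ?thesis" using P1 by simp
  next
    case False
    have P2: "d \<le> ?L - 1 - Suc e \<Longrightarrow> ((?L - 1 - d, a),(0,a)) \<in> conn n w s" for d
    proof (induction d)
      case 0
      have "Suc (?L - 1) mod ?L = 0" using L by simp
      then show ?case using ed[of "?L - 1"] False L by simp
    next
      case (Suc d)
      let ?k = "?L - 1 - Suc d"
      have "?k < ?L" "?k \<noteq> e" using Suc False by auto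
      then have "((?k,a),(Suc ?k mod ?L, a)) \<in> conn n w s" using ed by simp
      moreover have "Suc ?k mod ?L = ?L - 1 - d" using Suc False by simp
      ultimately have "((?k,a),(?L - 1 - d, a)) \<in> conn n w s" by simp
      moreover have "((?L - 1 - d, a),(0,a)) \<in> conn n w s" using Suc by simp
      ultimately show ?case by (rule conn_trans)
    qed
    show "k < ?L \<Longrightarrow> ?thesis"
    proof -
      assume k: "k < ?L"
      show ?thesis
      proof (cases "k \<le> e")
        case True then show ?thesis using P1 k by simp
      next
        case False
        then have "((?L - 1 - (?L - 1 - k), a),(0,a)) \<in> conn n w s" using P2[of "?L - 1 - k"] k by simp
        moreover have "?L - 1 - (?L - 1 - k) = k" using k by simp
        ultimately show ?thesis using conn_sym by simp
      qed
    qed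
  qed
qed


definition H :: "letter list \<Rightarrow> nat \<Rightarrow> nat \<Rightarrow> nat \<Rightarrow> bool" where
  "H w e a b = (a = b \<or> (e < length w \<and> (a = fst (w!e) - 1 \<or> a = fst (w!e)) \<and> (b = fst (w!e) - 1 \<or> b = fst (w!e))))"

definition Rel :: "nat \<Rightarrow> letter list \<Rightarrow> nat \<Rightarrow> (node \<times> node) set" where
  "Rel n w e = {((k,a),(k',b)). k < length w \<and> k' < length w \<and> a < n \<and> b < n \<and> H w e a b}"

lemma edge_rel:
  assumes valid: "\<forall>l\<in>set w. 1 \<le> fst l \<and> fst l < n" and L: "0 < length w"
    and V: "\<forall>k<length w. k \<noteq> e \<longrightarrow> snd (w!k) \<noteq> (k \<in> s)"
    and x: "x \<in> edges n w s"
  shows "x \<in> Rel n w e"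
proof -
  obtain k where k: "k < length w" "x \<in> cross_edges n w s k" using x by (auto simp: edges_def)
  have v: "1 \<le> fst (w!k)" "fst (w!k) < n" using valid k(1) nth_mem by blast+
  have "Suc k mod length w < length w" using L by simp
  then show ?thesis using k v V
    by (auto simp: cross_edges_def Let_def Rel_def H_def split: if_splits)
qed

lemma rel_trans: "(x,y) \<in> Rel n w e \<Longrightarrow> (y,z) \<in> Rel n w e \<Longrightarrow> (x,z) \<in> Rel n w e"
  by (auto simp: Rel_def H_def)

lemma rel_sym: "(x,y) \<in> Rel n w e \<Longrightarrow> (y,x) \<in> Rel n w e"
  by (auto simp: Rel_def H_def)

lemma conn_sub:
  assumes valid: "\<forall>l\<in>set w. 1 \<le> fst l \<and> fst l < n" and L: "0 < length w"
    and V: "\<forall>k<length w. k \<noteq> e \<longrightarrow> snd (w!k) \<noteq> (k \<in> s)"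
    and xy: "(x,y) \<in> conn n w s"
  shows "x = y \<or> (x,y) \<in> Rel n w e"
  using xy unfolding conn_def
proof (induction rule: rtrancl_induct)
  case base then show ?case by simp
next
  case (step y z)
  have "(y,z) \<in> Rel n w e" using step(2) edge_rel[OF valid L V] rel_sym by blast
  then show ?case using step(3) rel_trans by blast
qed

lemma conn_sup:
  assumes valid: "\<forall>l\<in>set w. 1 \<le> fst l \<and> fst l < n" and L: "0 < length w"
    and V: "\<forall>k<length w. k \<noteq> e \<longrightarrow> snd (w!k) \<noteq> (k \<in> s)"
    and T: "e < length w \<longrightarrow> snd (w!e) = (e \<in> s)"
    and xy: "(x,y) \<in> Rel n w e"
  shows "(x,y) \<in> conn n w s"
proof -
  obtain k a k' b where xy': "x = (k,a)" "y = (k',b)" "k < length w" "k' < length w" "a < n" "b < n" "H w e a b"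
    using xy by (auto simp: Rel_def)
  have ch: "((p,c),(q,c)) \<in> conn n w s" if "p < length w" "q < length w" "c < n" for p q c
    using chain[OF L that(3) V, of p] chain[OF L that(3) V, of q] that conn_sym conn_trans by blast
  show ?thesis
  proof (cases "a = b")
    case True then show ?thesis using ch xy' by simp
  next
    case False
    then have e: "e < length w" and ab: "(a = fst (w!e) - 1 \<and> b = fst (w!e)) \<or> (b = fst (w!e) - 1 \<and> a = fst (w!e))"
      using xy'(7) by (auto simp: H_def)
    have tb: "((e, fst (w!e) - 1),(e, fst (w!e))) \<in> conn n w s"
      using edge_turn[of e w s n] e T edge_conn by blast
    have "((e,a),(e,b)) \<in> conn n w s" using ab tb conn_sym by blast
    then show ?thesis using ch[of k e a] ch[of e k' b] xy' e conn_trans by blast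
  qed
qed


definition Fc :: "letter list \<Rightarrow> nat \<Rightarrow> nat \<Rightarrow> node set" where
  "Fc w e a = (if e < length w \<and> (a = fst (w!e) - 1 \<or> a = fst (w!e)) then Tc (length w) (fst (w!e)) else Str (length w) a)"

lemma cls_eq:
  assumes valid: "\<forall>l\<in>set w. 1 \<le> fst l \<and> fst l < n" and L: "0 < length w"
    and V: "\<forall>k<length w. k \<noteq> e \<longrightarrow> snd (w!k) \<noteq> (k \<in> s)"
    and T: "e < length w \<longrightarrow> snd (w!e) = (e \<in> s)"
    and k: "k < length w" and a: "a < n"
  shows "{y. ((k,a),y) \<in> conn n w s} = Fc w e a"
proof
  have en: "e < length w \<Longrightarrow> fst (w!e) < n" using valid nth_mem by blast
  show "{y. ((k,a),y) \<in> conn n w s} \<subseteq> Fc w e a"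
  proof
    fix y assume "y \<in> {y. ((k,a),y) \<in> conn n w s}"
    then have "(k,a) = y \<or> ((k,a),y) \<in> Rel n w e" using conn_sub[OF valid L V] by blast
    then show "y \<in> Fc w e a" using k by (auto simp: Rel_def H_def Fc_def Tc_def Str_def)
  qed
  show "Fc w e a \<subseteq> {y. ((k,a),y) \<in> conn n w s}"
  proof
    fix y assume y: "y \<in> Fc w e a"
    have "((k,a),y) \<in> Rel n w e"
    proof (cases "e < length w \<and> (a = fst (w!e) - 1 \<or> a = fst (w!e))")
      case True
      then show ?thesis using y k a en by (auto simp: Rel_def H_def Fc_def Tc_def)
    next
      case False
      then show ?thesis using y k a by (auto simp: Rel_def H_def Fc_def Str_def)
    qed
    then show "y \<in> {y. ((k,a),y) \<in> conn n w s}" using conn_sup[OF valid L V T] by blast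
  qed
qed

lemma circles_eq:
  assumes valid: "\<forall>l\<in>set w. 1 \<le> fst l \<and> fst l < n" and L: "0 < length w"
    and V: "\<forall>k<length w. k \<noteq> e \<longrightarrow> snd (w!k) \<noteq> (k \<in> s)"
    and T: "e < length w \<longrightarrow> snd (w!e) = (e \<in> s)"
  shows "circles n w s = Fc w e ` {..<n}"
proof
  show "circles n w s \<subseteq> Fc w e ` {..<n}"
    using cls_eq[OF valid L V T] by (auto simp: circles_def nodes_def)
  show "Fc w e ` {..<n} \<subseteq> circles n w s"
  proof
    fix C assume "C \<in> Fc w e ` {..<n}"
    then obtain a where a: "a < n" "C = Fc w e a" by auto
    then have "C = {y. ((0,a),y) \<in> conn n w s}" using cls_eq[OF valid L V T, of 0 a] L by simp
    moreover have "(0,a) \<in> nodes n w" using a L by (simp add: nodes_def)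
    ultimately show "C \<in> circles n w s" by (auto simp: circles_def)
  qed
qed

lemma nt_Str: "0 < L \<Longrightarrow> nontrivial (Str L a)"
proof -
  assume "0 < L"
  then have "{j. (0, j) \<in> Str L a} = {a}" by (auto simp: Str_def)
  then show ?thesis by (simp add: nontrivial_def)
qed

lemma nt_Tc: "0 < L \<Longrightarrow> 1 \<le> j \<Longrightarrow> \<not> nontrivial (Tc L j)"
proof -
  assume "0 < L" "1 \<le> j"
  then have "{m. (0, m) \<in> Tc L j} = {j - 1, j}" by (auto simp: Tc_def)
  then show ?thesis using \<open>1 \<le> j\<close> by (simp add: nontrivial_def)
qed


lemma Str_inj: "0 < L \<Longrightarrow> Str L a = Str L b \<longleftrightarrow> a = b"
  by (auto simp: Str_def set_eq_iff)

lemma Str_ne_Tc: "0 < L \<Longrightarrow> 1 \<le> i \<Longrightarrow> Str L a \<noteq> Tc L i"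
proof
  assume "0 < L" "1 \<le> i" "Str L a = Tc L i"
  then have "(0, i - 1) \<in> Str L a" "(0, i) \<in> Str L a" by (auto simp: Tc_def)
  then show False using \<open>1 \<le> i\<close> by (auto simp: Str_def)
qed

lemma circles_bl:
  assumes valid: "\<forall>l\<in>set w. 1 \<le> fst l \<and> fst l < n" and L: "0 < length w"
  shows "circles n w (braidlike w) = Str (length w) ` {..<n}"
proof -
  have "circles n w (braidlike w) = Fc w (length w) ` {..<n}"
    by (rule circles_eq[OF valid L]) (auto simp: braidlike_def)
  then show ?thesis by (simp add: Fc_def)
qed

lemma circles_s0:
  assumes valid: "\<forall>l\<in>set w. 1 \<le> fst l \<and> fst l < n" and L: "0 < length w"
    and c: "c < length w" "\<not> snd (w!c)"
  shows "circles n w (braidlike w - {c}) = Fc w c ` {..<n}"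
  by (rule circles_eq[OF valid L]) (use c in \<open>auto simp: braidlike_def\<close>)

lemma circles_s0':
  assumes valid: "\<forall>l\<in>set w. 1 \<le> fst l \<and> fst l < n" and L: "0 < length w"
    and c: "c < length w" "\<not> snd (w!c)" and j: "j = fst (w!c)"
  shows "circles n w (braidlike w - {c}) = insert (Tc (length w) j) (Str (length w) ` ({..<n} - {j - 1, j}))"
proof -
  have v: "1 \<le> j" "j < n" using valid c j nth_mem by blast+
  have "Fc w c ` {..<n} = insert (Tc (length w) j) (Str (length w) ` ({..<n} - {j - 1, j}))"
  proof
    show "Fc w c ` {..<n} \<subseteq> insert (Tc (length w) j) (Str (length w) ` ({..<n} - {j - 1, j}))"
      using c j by (auto simp: Fc_def)
    have "Tc (length w) j \<in> Fc w c ` {..<n}" using v c j by (auto simp: Fc_def intro!: image_eqI[of _ _ j])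
    moreover have "Str (length w) ` ({..<n} - {j - 1, j}) \<subseteq> Fc w c ` {..<n}"
    proof
      fix C assume "C \<in> Str (length w) ` ({..<n} - {j - 1, j})"
      then obtain a where "a < n" "a \<noteq> j - 1" "a \<noteq> j" "C = Str (length w) a" by auto
      then show "C \<in> Fc w c ` {..<n}" using j by (auto simp: Fc_def intro!: image_eqI[of _ _ a])
    qed
    ultimately show "insert (Tc (length w) j) (Str (length w) ` ({..<n} - {j - 1, j})) \<subseteq> Fc w c ` {..<n}" by blast
  qed
  then show ?thesis using circles_s0[OF valid L c] by simp
qed

lemma nt_s0:
  assumes valid: "\<forall>l\<in>set w. 1 \<le> fst l \<and> fst l < n" and L: "0 < length w"
    and c: "c < length w" "\<not> snd (w!c)"
  shows "{C \<in> circles n w (braidlike w - {c}). nontrivial C} = Str (length w) ` ({..<n} - {fst (w!c) - 1, fst (w!c)})"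
    and "card {C \<in> circles n w (braidlike w - {c}). nontrivial C} = n - 2"
proof -
  let ?j = "fst (w!c)"
  have v: "1 \<le> ?j" "?j < n" using valid c nth_mem by blast+
  show e: "{C \<in> circles n w (braidlike w - {c}). nontrivial C} = Str (length w) ` ({..<n} - {?j - 1, ?j})"
    using circles_s0'[OF valid L c refl] nt_Tc[OF L v(1)] nt_Str[OF L] by auto
  have "inj_on (Str (length w)) ({..<n} - {?j - 1, ?j})" using Str_inj[OF L] by (auto simp: inj_on_def)
  then have "card (Str (length w) ` ({..<n} - {?j - 1, ?j})) = card ({..<n} - {?j - 1, ?j})" by (rule card_image)
  also have "\<dots> = n - 2" using v by (subst card_Diff_subset) auto
  finally show "card {C \<in> circles n w (braidlike w - {c}). nontrivial C} = n - 2" using e by simp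
qed

lemma finite_circles: "finite (circles n w s)"
  by (simp add: circles_def nodes_def)

lemma kgr_low:
  assumes valid: "\<forall>l\<in>set w. 1 \<le> fst l \<and> fst l < n" and L: "0 < length w"
    and c: "c < length w" "\<not> snd (w!c)"
  shows "kgr n w (braidlike w - {c}, M) \<ge> 2 - int n"
proof -
  let ?s = "braidlike w - {c}"
  have "card {C \<in> circles n w ?s. nontrivial C \<and> C \<in> M} \<le> card {C \<in> circles n w ?s. nontrivial C}"
    by (rule card_mono) (auto simp: finite_circles)
  moreover have "1 \<le> fst (w!c)" "fst (w!c) < n" using valid c nth_mem by blast+
  ultimately have "int (card {C \<in> circles n w ?s. nontrivial C \<and> C \<in> M}) \<le> int n - 2"
    using nt_s0(2)[OF valid L c] by linarith
  then show ?thesis by (simp add: kgr_def)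
qed


lemma lower:
  assumes valid: "\<forall>l\<in>set w. 1 \<le> fst l \<and> fst l < n" and L: "0 < length w"
    and b: "bounds_in n w k"
  shows "2 - int n \<le> k"
proof -
  obtain Y where Y: "Y \<subseteq> gens n w" "\<forall>y\<in>Y. kgr n w y \<le> k" "kd n w Y = {psi n w}"
    using b by (auto simp: bounds_in_def)
  then have "odd (card {x \<in> Y \<inter> gens n w. dcoef n w x (psi n w)})" by (auto simp: kd_def)
  then have "{x \<in> Y \<inter> gens n w. dcoef n w x (psi n w)} \<noteq> {}" by (metis card.empty odd_card_imp_not_empty)
  then obtain s M where y: "(s,M) \<in> Y" "dcoef n w (s,M) (psi n w)" by auto
  then obtain c where c: "c < length w" "c \<notin> s" "braidlike w = insert c s"
    by (auto simp: dcoef_def psi_def)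
  then have s: "s = braidlike w - {c}" by auto
  have "c \<in> braidlike w" using c by auto
  then have "\<not> snd (w!c)" by (simp add: braidlike_def)
  then have "2 - int n \<le> kgr n w (s,M)" using kgr_low[OF valid L c(1)] s by simp
  then show ?thesis using Y(2) y(1) by force
qed


lemma psi_eq:
  assumes valid: "\<forall>l\<in>set w. 1 \<le> fst l \<and> fst l < n" and L: "0 < length w"
  shows "psi n w = (braidlike w, circles n w (braidlike w))"
  using circles_bl[OF valid L] nt_Str[OF L] by (auto simp: psi_def)

lemma dcoef_x:
  assumes valid: "\<forall>l\<in>set w. 1 \<le> fst l \<and> fst l < n" and L: "0 < length w"
    and c0: "c0 < length w" "w!c0 = (i, False)" and nopos: "(i, True) \<notin> set w"
    and y: "y \<in> gens n w"
  shows "dcoef n w (braidlike w - {c0}, circles n w (braidlike w - {c0})) y \<longleftrightarrow> y = psi n w"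
proof -
  let ?L = "length w"
  let ?s0 = "braidlike w - {c0}"
  let ?bl = "braidlike w"
  let ?C0 = "circles n w ?s0"
  let ?Cb = "circles n w ?bl"
  let ?T = "Tc ?L i"
  let ?R = "{..<n} - {i - 1, i}"
  have c0': "\<not> snd (w!c0)" "fst (w!c0) = i" using c0 by auto
  have iv: "1 \<le> i" "i < n" using valid c0 nth_mem by (metis fst_conv)+
  have C0: "?C0 = insert ?T (Str ?L ` ?R)" using circles_s0'[OF valid L c0(1) c0'(1)] c0'(2) by simp
  have Cb: "?Cb = Str ?L ` {..<n}" using circles_bl[OF valid L] .
  have TS: "Tc ?L i \<noteq> Str ?L a" "Str ?L a \<noteq> Tc ?L i" for a using Str_ne_Tc[OF L iv(1)] by metis+
  have c0bl: "c0 \<in> ?bl" using c0 by (simp add: braidlike_def)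
  have blins: "insert c0 ?s0 = ?bl" using c0bl by auto
  have Tn: "?T \<notin> Str ?L ` X" for X using TS by blast
  have RS: "Str ?L ` ?R \<subseteq> Str ?L ` {..<n}" by blast
  have A0: "?C0 - ?Cb = {?T}" unfolding C0 Cb using Tn RS by blast
  have B0: "?Cb - ?C0 = {Str ?L (i - 1), Str ?L i}"
    using C0 Cb TS Str_inj[OF L] iv by auto
  have Bc: "card {Str ?L (i - 1), Str ?L i} = 2" using Str_inj[OF L] iv by auto
  have com: "?C0 \<inter> ?Cb = Str ?L ` ?R" unfolding C0 Cb using Tn RS by blast
  have T1: "card ({?T} \<inter> ?C0) = 1" unfolding C0 by simp
  have psi: "psi n w = (?bl, ?Cb)" by (rule psi_eq[OF valid L])
  show ?thesis
  proof
    assume d: "dcoef n w (?s0, ?C0) y"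
    obtain s' M' where y': "y = (s', M')" by fastforce
    have M'sub: "M' \<subseteq> circles n w s'" using y y' by (auto simp: gens_def)
    obtain c where c: "c < ?L" "c \<notin> ?s0" "s' = insert c ?s0"
      and cond: "let A = ?C0 - circles n w s'; B = circles n w s' - ?C0 in
         (\<forall>C \<in> ?C0 \<inter> circles n w s'. (C \<in> ?C0) = (C \<in> M')) \<and>
         ((card A = 2 \<and> card B = 1 \<and> card (B \<inter> M') = card (A \<inter> ?C0)) \<or>
          (card A = 1 \<and> card B = 2 \<and> card (B \<inter> M') = card (A \<inter> ?C0) + 1))"
      using d y' unfolding dcoef_def by auto
    show "y = psi n w"
    proof (cases "c = c0")
      case True
      then have s': "s' = ?bl" using c blins by simp
      have lab: "\<forall>C \<in> ?C0 \<inter> ?Cb. C \<in> M'" and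
        sp: "card ({Str ?L (i - 1), Str ?L i} \<inter> M') = 2"
      proof -
        let ?B = "{Str ?L (i - 1), Str ?L i}"
        have cond': "(\<forall>C\<in>?C0 \<inter> ?Cb. (C \<in> ?C0) = (C \<in> M')) \<and>
          ((card {?T} = 2 \<and> card ?B = 1 \<and> card (?B \<inter> M') = card ({?T} \<inter> ?C0)) \<or>
           (card {?T} = 1 \<and> card ?B = 2 \<and> card (?B \<inter> M') = card ({?T} \<inter> ?C0) + 1))"
          using cond unfolding s' Let_def A0 B0 .
        then show "\<forall>C \<in> ?C0 \<inter> ?Cb. C \<in> M'" by blast
        from cond' have "card (?B \<inter> M') = card ({?T} \<inter> ?C0) + 1" by simp
        then show "card (?B \<inter> M') = 2" using T1 by simp
      qed
      have "{Str ?L (i - 1), Str ?L i} \<inter> M' = {Str ?L (i - 1), Str ?L i}"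
        by (rule card_subset_eq) (simp, blast, simp only: sp Bc)
      then have BM: "Str ?L (i - 1) \<in> M'" "Str ?L i \<in> M'" by auto
      have "?Cb \<subseteq> M'"
      proof
        fix C assume "C \<in> ?Cb"
        then obtain a where a: "a < n" "C = Str ?L a" unfolding Cb by blast
        show "C \<in> M'"
        proof (cases "a = i - 1 \<or> a = i")
          case True then show ?thesis using a BM by auto
        next
          case False
          then have "C \<in> ?C0 \<inter> ?Cb" unfolding com using a by blast
          then show ?thesis using lab by blast
        qed
      qed
      then have "M' = ?Cb" using M'sub s' by blast
      then show ?thesis using y' s' psi by simp
    next
      case False
      then have "c \<notin> ?bl" using c by auto
      then have pos: "snd (w!c)" using c by (simp add: braidlike_def)
      define j where "j = fst (w!c)"
      have jv: "1 \<le> j" "j < n" using valid c j_def nth_mem by blast+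
      have "w!c = (j, True)" using pos j_def by (metis prod.collapse)
      then have ji: "j \<noteq> i" using nopos c nth_mem by metis
      define K1 where "K1 = {y. ((c, j - 1), y) \<in> conn n w ?s0}"
      define K2 where "K2 = {y. ((c, j), y) \<in> conn n w ?s0}"
      have V0: "\<forall>k<?L. k \<noteq> c0 \<longrightarrow> snd (w!k) \<noteq> (k \<in> ?s0)" by (auto simp: braidlike_def)
      have T0: "c0 < ?L \<longrightarrow> snd (w!c0) = (c0 \<in> ?s0)" using c0' by simp
      have K1e: "K1 = Fc w c0 (j - 1)" unfolding K1_def using cls_eq[OF valid L V0 T0 c(1)] jv by simp
      have K2e: "K2 = Fc w c0 j" unfolding K2_def using cls_eq[OF valid L V0 T0 c(1)] jv by simp
      have n1: "(c, j) \<notin> K1" using K1e c0'(2) c0(1) ji jv by (auto simp: Fc_def Tc_def Str_def)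
      have n2: "(c, j - 1) \<notin> K2" using K2e c0'(2) c0(1) ji jv by (auto simp: Fc_def Tc_def Str_def)
      have i1: "(c, j - 1) \<in> K1" "(c, j) \<in> K2" by (auto simp: K1_def K2_def conn_def)
      have nd: "(c, j - 1) \<in> nodes n w" "(c, j) \<in> nodes n w" using c jv by (auto simp: nodes_def)
      have K12: "K1 \<in> ?C0" "K2 \<in> ?C0" using nd by (auto simp: circles_def K1_def K2_def)
      have ed: "((c, j - 1), (c, j)) \<in> conn n w s'"
        using edge_turn[of c w s' n] c pos j_def edge_conn by auto
      have "K1 \<notin> circles n w s'"
      proof
        assume "K1 \<in> circles n w s'"
        then obtain p where p: "K1 = {y. (p, y) \<in> conn n w s'}" by (auto simp: circles_def)
        then have "(p, (c, j - 1)) \<in> conn n w s'" using i1 by blast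
        then have "(p, (c, j)) \<in> conn n w s'" using ed conn_trans by blast
        then show False using p n1 by blast
      qed
      moreover have "K2 \<notin> circles n w s'"
      proof
        assume "K2 \<in> circles n w s'"
        then obtain p where p: "K2 = {y. (p, y) \<in> conn n w s'}" by (auto simp: circles_def)
        then have "(p, (c, j)) \<in> conn n w s'" using i1 by blast
        then have "(p, (c, j - 1)) \<in> conn n w s'" using ed conn_sym conn_trans by blast
        then show False using p n2 by blast
      qed
      ultimately have sub: "{K1, K2} \<subseteq> ?C0 - circles n w s'" using K12 by blast
      have "K1 \<noteq> K2" using n1 i1 by blast
      then have "card {K1, K2} = 2" by simp
      then have cA: "2 \<le> card (?C0 - circles n w s')"
        by (metis card_mono finite_Diff finite_circles sub)
      have "card ((?C0 - circles n w s') \<inter> ?C0) = card (?C0 - circles n w s')"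
        by (simp add: Int_absorb2)
      moreover have "card (circles n w s' - ?C0) = 1 \<Longrightarrow> card ((circles n w s' - ?C0) \<inter> M') \<le> 1"
        by (metis card_mono finite_Diff finite_circles inf_le1)
      ultimately show ?thesis using cond cA unfolding Let_def by auto
    qed
  next
    assume "y = psi n w"
    then have yy: "y = (?bl, ?Cb)" using psi by simp
    have "(\<forall>C\<in>?C0 \<inter> ?Cb. (C \<in> ?C0) = (C \<in> ?Cb)) \<and>
          ((card {?T} = 2 \<and> card {Str ?L (i - 1), Str ?L i} = 1 \<and> card ({Str ?L (i - 1), Str ?L i} \<inter> ?Cb) = card ({?T} \<inter> ?C0)) \<or>
           (card {?T} = 1 \<and> card {Str ?L (i - 1), Str ?L i} = 2 \<and> card ({Str ?L (i - 1), Str ?L i} \<inter> ?Cb) = card ({?T} \<inter> ?C0) + 1))"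
    proof -
      have "{Str ?L (i - 1), Str ?L i} \<inter> ?Cb = {Str ?L (i - 1), Str ?L i}" unfolding Cb using iv by auto
      then show ?thesis using Bc T1 by simp
    qed
    then have "let A = ?C0 - circles n w ?bl; B = circles n w ?bl - ?C0 in
         (\<forall>C \<in> ?C0 \<inter> circles n w ?bl. (C \<in> ?C0) = (C \<in> ?Cb)) \<and>
         ((card A = 2 \<and> card B = 1 \<and> card (B \<inter> ?Cb) = card (A \<inter> ?C0)) \<or>
          (card A = 1 \<and> card B = 2 \<and> card (B \<inter> ?Cb) = card (A \<inter> ?C0) + 1))"
      unfolding Let_def A0 B0 .
    moreover have "c0 \<notin> ?s0" by simp
    ultimately show "dcoef n w (?s0, ?C0) y"
      unfolding yy dcoef_def using c0(1) blins by blast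
  qed
qed


theorem mainTheorem7:
  fixes n :: nat and w :: "(nat \<times> bool) list" and i :: nat
  assumes "\<forall>l \<in> set w. 1 \<le> fst l \<and> fst l < n"
    and "1 \<le> i" and "i < n"
    and "(i, False) \<in> set w" and "(i, True) \<notin> set w"
  shows "kappa n w = 2"
proof -
  note valid = assms(1)
  obtain c0 where c0: "c0 < length w" "w!c0 = (i, False)" using assms(4) by (metis in_set_conv_nth)
  have L: "0 < length w" using c0(1) by linarith
  let ?s0 = "braidlike w - {c0}"
  let ?x = "(?s0, circles n w ?s0)"
  have c0': "\<not> snd (w!c0)" using c0 by simp
  have xg: "?x \<in> gens n w" by (auto simp: gens_def braidlike_def)
  have pg: "psi n w \<in> gens n w" using psi_eq[OF valid L] by (auto simp: gens_def braidlike_def)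
  have kx: "kgr n w ?x = 2 - int n"
  proof -
    have "{C \<in> circles n w ?s0. nontrivial C \<and> C \<notin> circles n w ?s0} = {}" by blast
    then have e0: "card {C \<in> circles n w ?s0. nontrivial C \<and> C \<notin> circles n w ?s0} = 0" by (simp only: card.empty)
    moreover have "{C \<in> circles n w ?s0. nontrivial C \<and> C \<in> circles n w ?s0} = {C \<in> circles n w ?s0. nontrivial C}" by blast
    ultimately show ?thesis using nt_s0(2)[OF valid L c0(1) c0'] assms(2,3) unfolding kgr_def by simp
  qed
  have kd: "kd n w {?x} = {psi n w}"
  proof -
    have "\<And>y. {x' \<in> {?x} \<inter> gens n w. dcoef n w x' y} = (if dcoef n w ?x y then {?x} else {})"
      using xg by auto
    then have "kd n w {?x} = {y \<in> gens n w. dcoef n w ?x y}" unfolding kd_def by auto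
    also have "\<dots> = {psi n w}" using dcoef_x[OF valid L c0 assms(5)] pg by blast
    finally show ?thesis .
  qed
  have b: "bounds_in n w (2 - int n)"
    unfolding bounds_in_def using xg kx kd by (intro exI[of _ "{?x}"]) auto
  have inf: "Inf {k. bounds_in n w k} = 2 - int n"
    by (rule cInf_eq_minimum) (use b lower[OF valid L] in auto)
  show ?thesis using b inf unfolding kappa_def by auto
qed

end
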